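(* Let $\delta$ satisfy the Kalmanson conditions with respect to $\pi=(x_1,\dots,x_n)$, let $C_1,\dots,C_m$ ($m\ge3$) be a partition of $X$ into consecutive intervals of $\pi$ in this order, and let $\mu$ be a block weighting. Then for every $1\le i$ with $i+2\le m$, \[Q_\delta(C_i,C_{i+2})-Q_\delta(C_i,C_{i+1})\ge0.\]
   Context: $X=\{1,\dots,n\}$. A dissimilarity map is $\delta:X\times X\to\mathbb{R}$ with $\delta(i,j)=\delta(j,i)\ge0$, $\delta(i,i)=0$. A circular ordering is a listing $\pi=(x_1,\dots,x_n)$ of $X$ regarded cyclically. $\delta$ satisfies the Kalmanson conditions with respect to $\pi$ if for all $1\le i<j<k<l\le n$: $\delta(x_i,x_j)+\delta(x_k,x_l)\le\delta(x_i,x_k)+\delta(x_j,x_l)$ and $\delta(x_i,x_l)+\delta(x_j,x_k)\le\delta(x_i,x_k)+\delta(x_j,x_l)$. The partition into consecutive intervals means $C_1=\{x_1,\dots,x_{a_1}\}$, $C_2=\{x_{a_1+1},\dots,x_{a_2}\},\dots,C_m=\{x_{a_{m-1}+1},\dots,x_n\}$. A block weighting is $\mu:X\to\mathbb{R}_{\ge0}$ with $\sum_{x\in C_r}\mu(x)=1$ for every $r$. Set $\delta(C_r,C_s)=\sum_{x\in C_r,y\in C_s}\mu(x)\mu(y)\delta(x,y)$ and $Q_\delta(C_r,C_s)=(m-2)\delta(C_r,C_s)-\sum_{t\ne r}\delta(C_r,C_t)-\sum_{t\ne s}\delta(C_s,C_t)$. *)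

theory Defs
  imports Complex_Main
begin

text \<open>Ground set X = {1..n}. Points are natural numbers.\<close>

definition dissimilarity :: "nat \<Rightarrow> (nat \<Rightarrow> nat \<Rightarrow> real) \<Rightarrow> bool" where
  "dissimilarity n \<delta> \<longleftrightarrow>
     (\<forall>i\<in>{1..n}. \<forall>j\<in>{1..n}. \<delta> i j = \<delta> j i \<and> \<delta> i j \<ge> 0) \<and>
     (\<forall>i\<in>{1..n}. \<delta> i i = 0)"

text \<open>A circular ordering (x_1,...,x_n) of X is given by the listing \<pi> k = x_k, a bijection of {1..n}.\<close>
definition circular_ordering :: "nat \<Rightarrow> (nat \<Rightarrow> nat) \<Rightarrow> bool" where
  "circular_ordering n \<pi> \<longleftrightarrow> bij_betw \<pi> {1..n} {1..n}"

definition kalmanson :: "nat \<Rightarrow> (nat \<Rightarrow> nat \<Rightarrow> real) \<Rightarrow> (nat \<Rightarrow> nat) \<Rightarrow> bool" where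
  "kalmanson n \<delta> \<pi> \<longleftrightarrow>
     (\<forall>i j k l. 1 \<le> i \<and> i < j \<and> j < k \<and> k < l \<and> l \<le> n \<longrightarrow>
        \<delta> (\<pi> i) (\<pi> j) + \<delta> (\<pi> k) (\<pi> l) \<le> \<delta> (\<pi> i) (\<pi> k) + \<delta> (\<pi> j) (\<pi> l) \<and>
        \<delta> (\<pi> i) (\<pi> l) + \<delta> (\<pi> j) (\<pi> k) \<le> \<delta> (\<pi> i) (\<pi> k) + \<delta> (\<pi> j) (\<pi> l))"

text \<open>Consecutive-interval partition given by cut points 0 = a 0 < a 1 < ... < a m = n;
  block r (1 \<le> r \<le> m) is C_r = {x_{a(r-1)+1}, ..., x_{a r}} (nonempty).\<close>
definition interval_cuts :: "nat \<Rightarrow> nat \<Rightarrow> (nat \<Rightarrow> nat) \<Rightarrow> bool" where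
  "interval_cuts n m a \<longleftrightarrow> a 0 = 0 \<and> a m = n \<and> (\<forall>r<m. a r < a (Suc r))"

definition block :: "(nat \<Rightarrow> nat) \<Rightarrow> (nat \<Rightarrow> nat) \<Rightarrow> nat \<Rightarrow> nat set" where
  "block \<pi> a r = \<pi> ` {a (r - 1) + 1 .. a r}"

definition block_weighting ::
  "nat \<Rightarrow> nat \<Rightarrow> (nat \<Rightarrow> nat) \<Rightarrow> (nat \<Rightarrow> nat) \<Rightarrow> (nat \<Rightarrow> real) \<Rightarrow> bool" where
  "block_weighting n m \<pi> a \<mu> \<longleftrightarrow>
     (\<forall>x\<in>{1..n}. \<mu> x \<ge> 0) \<and> (\<forall>r\<in>{1..m}. (\<Sum>x\<in>block \<pi> a r. \<mu> x) = 1)"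

definition block_dist ::
  "(nat \<Rightarrow> real) \<Rightarrow> (nat \<Rightarrow> nat \<Rightarrow> real) \<Rightarrow> nat set \<Rightarrow> nat set \<Rightarrow> real" where
  "block_dist \<mu> \<delta> A B = (\<Sum>x\<in>A. \<Sum>y\<in>B. \<mu> x * \<mu> y * \<delta> x y)"

definition Qdelta ::
  "nat \<Rightarrow> (nat \<Rightarrow> nat) \<Rightarrow> (nat \<Rightarrow> nat) \<Rightarrow> (nat \<Rightarrow> real) \<Rightarrow> (nat \<Rightarrow> nat \<Rightarrow> real) \<Rightarrow> nat \<Rightarrow> nat \<Rightarrow> real" where
  "Qdelta m \<pi> a \<mu> \<delta> r s =
     (real m - 2) * block_dist \<mu> \<delta> (block \<pi> a r) (block \<pi> a s)
     - (\<Sum>t\<in>{1..m} - {r}. block_dist \<mu> \<delta> (block \<pi> a r) (block \<pi> a t))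
     - (\<Sum>t\<in>{1..m} - {s}. block_dist \<mu> \<delta> (block \<pi> a s) (block \<pi> a t))"

end

theory Submission
  imports Defs
begin

definition P4 :: "(nat \<Rightarrow> real) \<Rightarrow> nat set \<Rightarrow> nat set \<Rightarrow> nat set \<Rightarrow> nat set \<Rightarrow> (nat \<Rightarrow> nat \<Rightarrow> nat \<Rightarrow> nat \<Rightarrow> real) \<Rightarrow> real" where
  "P4 \<mu> A B C T h = (\<Sum>a\<in>A. \<Sum>b\<in>B. \<Sum>c\<in>C. \<Sum>d\<in>T. \<mu> a * \<mu> b * \<mu> c * \<mu> d * h a b c d)"

lemma P4_AB:
  assumes "sum \<mu> C = 1" "sum \<mu> T = 1"
  shows "P4 \<mu> A B C T (\<lambda>a b c d. \<delta> a b) = block_dist \<mu> \<delta> A B"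
proof -
  have "block_dist \<mu> \<delta> A B = (\<Sum>a\<in>A. \<Sum>b\<in>B. \<mu> a * \<mu> b * \<delta> a b * (\<Sum>c\<in>C. \<mu> c) * (\<Sum>d\<in>T. \<mu> d))"
    using assms by (simp add: block_dist_def)
  also have "\<dots> = P4 \<mu> A B C T (\<lambda>a b c d. \<delta> a b)"
    unfolding P4_def by (simp add: sum_distrib_left sum_distrib_right mult_ac)
  finally show ?thesis by simp
qed

lemma P4_CT:
  assumes "sum \<mu> A = 1" "sum \<mu> B = 1"
  shows "P4 \<mu> A B C T (\<lambda>a b c d. \<delta> c d) = block_dist \<mu> \<delta> C T"
proof -
  have "block_dist \<mu> \<delta> C T = (\<Sum>a\<in>A. \<mu> a * (\<Sum>b\<in>B. \<mu> b * (\<Sum>c\<in>C. \<Sum>d\<in>T. \<mu> c * \<mu> d * \<delta> c d)))"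
    using assms by (simp add: block_dist_def sum_distrib_right[symmetric])
  also have "\<dots> = P4 \<mu> A B C T (\<lambda>a b c d. \<delta> c d)"
    unfolding P4_def by (simp add: sum_distrib_left sum_distrib_right mult_ac)
  finally show ?thesis by simp
qed

lemma P4_AC:
  assumes "sum \<mu> B = 1" "sum \<mu> T = 1"
  shows "P4 \<mu> A B C T (\<lambda>a b c d. \<delta> a c) = block_dist \<mu> \<delta> A C"
proof -
  have "block_dist \<mu> \<delta> A C = (\<Sum>a\<in>A. (\<Sum>b\<in>B. \<mu> b * (\<Sum>c\<in>C. \<mu> a * \<mu> c * \<delta> a c * (\<Sum>d\<in>T. \<mu> d))))"
    using assms by (simp add: block_dist_def sum_distrib_right[symmetric])
  also have "\<dots> = P4 \<mu> A B C T (\<lambda>a b c d. \<delta> a c)"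
    unfolding P4_def by (simp add: sum_distrib_left sum_distrib_right mult_ac)
  finally show ?thesis by simp
qed

lemma P4_BD:
  assumes "sum \<mu> A = 1" "sum \<mu> C = 1"
  shows "P4 \<mu> A B C T (\<lambda>a b c d. \<delta> b d) = block_dist \<mu> \<delta> B T"
proof -
  have "block_dist \<mu> \<delta> B T = (\<Sum>a\<in>A. \<mu> a * (\<Sum>b\<in>B. \<Sum>c\<in>C. \<mu> c * (\<Sum>d\<in>T. \<mu> b * \<mu> d * \<delta> b d)))"
    using assms by (simp add: block_dist_def sum_distrib_right[symmetric] sum.swap[of _ B C])
  also have "\<dots> = P4 \<mu> A B C T (\<lambda>a b c d. \<delta> b d)"
    unfolding P4_def by (simp add: sum_distrib_left sum_distrib_right mult_ac)
  finally show ?thesis by simp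
qed

lemma P4_add: "P4 \<mu> A B C T (\<lambda>a b c d. f a b c d + g a b c d) = P4 \<mu> A B C T f + P4 \<mu> A B C T g"
  unfolding P4_def by (simp add: distrib_left sum.distrib)

lemma P4_mono:
  assumes "\<And>a b c d. a \<in> A \<Longrightarrow> b \<in> B \<Longrightarrow> c \<in> C \<Longrightarrow> d \<in> T \<Longrightarrow> f a b c d \<le> g a b c d"
    and "\<And>x. x \<in> A \<union> B \<union> C \<union> T \<Longrightarrow> \<mu> x \<ge> 0"
  shows "P4 \<mu> A B C T f \<le> P4 \<mu> A B C T g"
  unfolding P4_def
  by (intro sum_mono mult_left_mono assms) (auto intro!: mult_nonneg_nonneg assms(2))

lemma cuts_mono:
  assumes "interval_cuts n m a" "r \<le> s" "s \<le> m"
  shows "a r \<le> a s"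
  using assms(2,3)
proof (induction s)
  case 0 then show ?case by simp
next
  case (Suc s)
  then show ?case
  proof (cases "r = Suc s")
    case False
    then have "a r \<le> a s" using Suc by simp
    moreover have "a s < a (Suc s)" using assms(1) Suc.prems unfolding interval_cuts_def by simp
    ultimately show ?thesis by simp
  qed simp
qed

lemma block_idx:
  assumes "x \<in> block \<pi> a r"
  obtains p where "x = \<pi> p" "a (r - 1) < p" "p \<le> a r"
  using assms unfolding block_def by auto

lemma idx_lt:
  assumes "interval_cuts n m a" "r < s" "s \<le> m" "p \<le> a r" "a (s - 1) < q"
  shows "p < q"
proof -
  have "a r \<le> a (s - 1)" using cuts_mono[OF assms(1)] assms(2,3) by simp
  then show ?thesis using assms by simp
qed

lemma block_sub:
  assumes "circular_ordering n \<pi>" "interval_cuts n m a" "r \<le> m"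
  shows "block \<pi> a r \<subseteq> {1..n}"
proof -
  have "a r \<le> n" using cuts_mono[OF assms(2) assms(3)] assms(2) unfolding interval_cuts_def by simp
  then have "{a (r - 1) + 1..a r} \<subseteq> {1..n}" by auto
  then show ?thesis using assms(1) unfolding block_def circular_ordering_def bij_betw_def by auto
qed


lemma key_ineq:
  assumes dis: "dissimilarity n \<delta>" and co: "circular_ordering n \<pi>" and ka: "kalmanson n \<delta> \<pi>"
    and cu: "interval_cuts n m a" and bw: "block_weighting n m \<pi> a \<mu>"
    and i1: "1 \<le> i" and im: "i + 2 \<le> m" and t: "t \<in> {1..m}" "t \<notin> {i, i+1, i+2}"
  shows "block_dist \<mu> \<delta> (block \<pi> a i) (block \<pi> a (i+1)) + block_dist \<mu> \<delta> (block \<pi> a (i+2)) (block \<pi> a t)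
     \<le> block_dist \<mu> \<delta> (block \<pi> a i) (block \<pi> a (i+2)) + block_dist \<mu> \<delta> (block \<pi> a (i+1)) (block \<pi> a t)"
proof -
  define A where "A = block \<pi> a i"
  define B where "B = block \<pi> a (i+1)"
  define C where "C = block \<pi> a (i+2)"
  define T where "T = block \<pi> a t"
  have sA: "sum \<mu> A = 1" and sB: "sum \<mu> B = 1" and sC: "sum \<mu> C = 1" and sT: "sum \<mu> T = 1"
    using bw i1 im t unfolding block_weighting_def A_def B_def C_def T_def by auto
  have sub: "A \<union> B \<union> C \<union> T \<subseteq> {1..n}"
    using block_sub[OF co cu] im t unfolding A_def B_def C_def T_def by auto
  have sym: "\<delta> x y = \<delta> y x" if "x \<in> {1..n}" "y \<in> {1..n}" for x y
    using dis that unfolding dissimilarity_def by blast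
  have n: "a m = n" using cu unfolding interval_cuts_def by simp
  have pt: "\<delta> x y + \<delta> z w \<le> \<delta> x z + \<delta> y w"
    if x: "x \<in> A" and y: "y \<in> B" and z: "z \<in> C" and w: "w \<in> T" for x y z w
  proof -
    obtain p where p: "x = \<pi> p" "a (i - 1) < p" "p \<le> a i" using x block_idx unfolding A_def by metis
    obtain q where q: "y = \<pi> q" "a (i + 1 - 1) < q" "q \<le> a (i+1)" using y block_idx unfolding B_def by metis
    obtain r where r: "z = \<pi> r" "a (i + 2 - 1) < r" "r \<le> a (i+2)" using z block_idx unfolding C_def by metis
    obtain s where s: "w = \<pi> s" "a (t - 1) < s" "s \<le> a t" using w block_idx unfolding T_def by metis
    have pq: "p < q" using idx_lt[OF cu, of i "i+1" p q] p q im by simp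
    have qr: "q < r" using idx_lt[OF cu, of "i+1" "i+2" q r] q r im by simp
    have p1: "1 \<le> p" using p by simp
    have "r \<le> n" using cuts_mono[OF cu, of "i+2" m] r im n by simp
    have "s \<le> n" using cuts_mono[OF cu, of t m] s t n by simp
    show ?thesis
    proof (cases "t > i + 2")
      case True
      have "r < s" using idx_lt[OF cu, of "i+2" t r s] r s t True by simp
      then show ?thesis using ka pq qr p1 \<open>s \<le> n\<close> p q r s unfolding kalmanson_def by blast
    next
      case False
      then have "t < i" using t by auto
      have sp: "s < p" using idx_lt[OF cu, of t i s p] p s \<open>t < i\<close> im by simp
      have s1: "1 \<le> s" using s by simp
      have "\<delta> w z + \<delta> x y \<le> \<delta> w y + \<delta> x z"
        using ka sp pq qr s1 \<open>r \<le> n\<close> p q r s unfolding kalmanson_def by blast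
      moreover have "\<delta> w z = \<delta> z w" "\<delta> w y = \<delta> y w"
      proof -
        have "w \<in> {1..n}" "z \<in> {1..n}" "y \<in> {1..n}" using sub y z w by blast+
        then show "\<delta> w z = \<delta> z w" "\<delta> w y = \<delta> y w" using sym by blast+
      qed
      ultimately show ?thesis by simp
    qed
  qed
  have "P4 \<mu> A B C T (\<lambda>a b c d. \<delta> a b + \<delta> c d) \<le> P4 \<mu> A B C T (\<lambda>a b c d. \<delta> a c + \<delta> b d)"
    by (rule P4_mono) (use pt bw sub in \<open>auto simp: block_weighting_def\<close>)
  then show ?thesis
    unfolding P4_add P4_AB[OF sC sT] P4_CT[OF sA sB] P4_AC[OF sB sT] P4_BD[OF sA sC]
    by (simp add: A_def B_def C_def T_def)
qed


lemma bd_sym: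
  assumes "\<And>x y. x \<in> A \<Longrightarrow> y \<in> B \<Longrightarrow> \<delta> x y = \<delta> y x"
  shows "block_dist \<mu> \<delta> A B = block_dist \<mu> \<delta> B A"
  unfolding block_dist_def
  by (subst sum.swap) (auto intro!: sum.cong simp: assms mult_ac)

theorem mainTheorem7:
  fixes n m :: nat and \<delta> :: "nat \<Rightarrow> nat \<Rightarrow> real" and \<pi> a :: "nat \<Rightarrow> nat"
    and \<mu> :: "nat \<Rightarrow> real" and i :: nat
  assumes "dissimilarity n \<delta>"
    and "circular_ordering n \<pi>"
    and "kalmanson n \<delta> \<pi>"
    and "m \<ge> 3"
    and "interval_cuts n m a"
    and "block_weighting n m \<pi> a \<mu>"
    and "1 \<le> i" and "i + 2 \<le> m"
  shows "Qdelta m \<pi> a \<mu> \<delta> i (i + 2) - Qdelta m \<pi> a \<mu> \<delta> i (i + 1) \<ge> 0"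
proof -
  define D where "D r s = block_dist \<mu> \<delta> (block \<pi> a r) (block \<pi> a s)" for r s
  have sym: "D r s = D s r" if "r \<le> m" "s \<le> m" for r s
  proof -
    have "block \<pi> a r \<union> block \<pi> a s \<subseteq> {1..n}" using block_sub[OF assms(2,5)] that by auto
    then show ?thesis unfolding D_def using assms(1) unfolding dissimilarity_def
      by (intro bd_sym) blast
  qed
  define U where "U = {1..m} - {i+1, i+2}"
  have fU: "finite U" unfolding U_def by simp
  have cU: "card U = m - 2" unfolding U_def using assms(7,8) by (subst card_Diff_subset) auto
  have e1: "{1..m} - {i+1} = insert (i+2) U" "i+2 \<notin> U" "{1..m} - {i+2} = insert (i+1) U" "i+1 \<notin> U"
    unfolding U_def using assms(7,8) by auto
  have S1: "(\<Sum>t\<in>{1..m} - {i+1}. D (i+1) t) = D (i+1) (i+2) + (\<Sum>t\<in>U. D (i+1) t)"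
    using e1 fU by simp
  have S2: "(\<Sum>t\<in>{1..m} - {i+2}. D (i+2) t) = D (i+2) (i+1) + (\<Sum>t\<in>U. D (i+2) t)"
    using e1 fU by simp
  have "Qdelta m \<pi> a \<mu> \<delta> i (i + 2) - Qdelta m \<pi> a \<mu> \<delta> i (i + 1)
     = (real m - 2) * (D i (i+2) - D i (i+1)) + (\<Sum>t\<in>{1..m} - {i+1}. D (i+1) t) - (\<Sum>t\<in>{1..m} - {i+2}. D (i+2) t)"
    unfolding Qdelta_def D_def by (simp add: algebra_simps)
  also have "\<dots> = (\<Sum>t\<in>U. D i (i+2) - D i (i+1) + D (i+1) t - D (i+2) t)"
  proof -
    have "real m - 2 = real (card U)" using cU assms(4) by simp
    then show ?thesis using S1 S2 sym[of "i+1" "i+2"] assms(8)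
      by (simp add: sum.distrib sum_subtractf algebra_simps)
  qed
  also have "\<dots> \<ge> 0"
  proof (rule sum_nonneg)
    fix t assume t: "t \<in> U"
    show "0 \<le> D i (i+2) - D i (i+1) + D (i+1) t - D (i+2) t"
    proof (cases "t = i")
      case True
      then show ?thesis using sym[of i "i+1"] sym[of i "i+2"] assms(8) by simp
    next
      case False
      then have "t \<in> {1..m}" "t \<notin> {i, i+1, i+2}" using t unfolding U_def by auto
      from key_ineq[OF assms(1,2,3,5,6,7,8) this] show ?thesis unfolding D_def by simp
    qed
  qed
  finally show ?thesis .
qed

end
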